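(* Let $(S,\cdot)$ be a discrete semigroup, let $\mathcal{F}$ be a filter on $S$ such that $\overline{\mathcal{F}}$ is a subsemigroup of $\beta S$, let $(X,\langle T_s\rangle_{s\in S})$ be a dynamical system, let $L$ be a minimal left ideal of $\overline{\mathcal{F}}$, and let $x\in X$. The following are equivalent: (a) $x$ is an $\mathcal{F}$-uniformly recurrent point of $(X,\langle T_s\rangle_{s\in S})$; (b) there exists $u\in L$ such that $T_u(x)=x$; (c) there exist $y\in X$ and an idempotent $u\in L$ such that $T_u(y)=x$; (d) there exists an idempotent $u\in L$ such that $T_u(x)=x$.
   Context: $\beta S$ is the Stone–Čech compactification of $S$ (ultrafilters on $S$) with the extended operation making it a compact right topological semigroup ($A\in pq$ iff $\{x\in S:x^{-1}A\in q\}\in p$, where $x^{-1}A=\{y: xy\in A\}$). $\overline{\mathcal{F}}=\bigcap_{F\in\mathcal{F}}\overline{F}$ is the set of ultrafilters containing $\mathcal{F}$. A dynamical system $(X,\langle T_s\rangle_{s\in S})$: $X$ compact Hausdorff, each $T_s$ continuous, $T_s\circ T_t=T_{st}$. For $p\in\beta S$, $T_p(x)=p\text{-}\lim_{s\in S}T_s(x)$; one has $T_p\circ T_q=T_{pq}$. A set $A\subseteq S$ is $\mathcal{F}$-syndetic if for every $F\in\mathcal{F}$ there is a finite $G\subseteq F$ with $\bigcup_{t\in G}t^{-1}A\in\mathcal{F}$. A point $x$ is $\mathcal{F}$-uniformly recurrent if for every neighbourhood $U$ of $x$, $\{s\in S:T_s(x)\in U\}$ is $\mathcal{F}$-syndetic.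 *)

theory Defs
  imports "HOL-Analysis.Analysis"
begin

definition is_ultrafilter :: "'s set set \<Rightarrow> bool" where
  "is_ultrafilter p \<longleftrightarrow> UNIV \<in> p \<and> {} \<notin> p
     \<and> (\<forall>A B. A \<in> p \<and> A \<subseteq> B \<longrightarrow> B \<in> p)
     \<and> (\<forall>A B. A \<in> p \<and> B \<in> p \<longrightarrow> A \<inter> B \<in> p)
     \<and> (\<forall>A. A \<in> p \<or> - A \<in> p)"

definition betaS :: "'s set set set" where
  "betaS = {p. is_ultrafilter p}"

definition linv :: "'s::semigroup_mult \<Rightarrow> 's set \<Rightarrow> 's set" where
  "linv x A = {y. x * y \<in> A}"

definition uprod :: "'s::semigroup_mult set set \<Rightarrow> 's set set \<Rightarrow> 's set set" where
  "uprod p q = {A. {x. linv x A \<in> q} \<in> p}"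

definition Fbar :: "'s filter \<Rightarrow> 's set set set" where
  "Fbar F = {p \<in> betaS. \<forall>A. eventually (\<lambda>s. s \<in> A) F \<longrightarrow> A \<in> p}"

definition subsemigroup :: "'s::semigroup_mult set set set \<Rightarrow> bool" where
  "subsemigroup M \<longleftrightarrow> M \<noteq> {} \<and> (\<forall>p\<in>M. \<forall>q\<in>M. uprod p q \<in> M)"

definition left_ideal :: "'s::semigroup_mult set set set \<Rightarrow> 's set set set \<Rightarrow> bool" where
  "left_ideal M L \<longleftrightarrow> L \<noteq> {} \<and> L \<subseteq> M \<and> (\<forall>q\<in>M. \<forall>p\<in>L. uprod q p \<in> L)"

definition minimal_left_ideal :: "'s::semigroup_mult set set set \<Rightarrow> 's set set set \<Rightarrow> bool" where
  "minimal_left_ideal M L \<longleftrightarrow> left_ideal M L \<and> (\<forall>L'. left_ideal M L' \<and> L' \<subseteq> L \<longrightarrow> L' = L)"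

definition dyn_system :: "('s::semigroup_mult \<Rightarrow> 'x::t2_space \<Rightarrow> 'x) \<Rightarrow> bool" where
  "dyn_system T \<longleftrightarrow> compact (UNIV :: 'x set) \<and> (\<forall>s. continuous_on UNIV (T s))
     \<and> (\<forall>s t. T s \<circ> T t = T (s * t))"

definition Tp :: "('s \<Rightarrow> 'x::topological_space \<Rightarrow> 'x) \<Rightarrow> 's set set \<Rightarrow> 'x \<Rightarrow> 'x" where
  "Tp T p x = (THE y. \<forall>U. open U \<and> y \<in> U \<longrightarrow> {s. T s x \<in> U} \<in> p)"

definition F_syndetic :: "'s filter \<Rightarrow> 's::semigroup_mult set \<Rightarrow> bool" where
  "F_syndetic F A \<longleftrightarrow> (\<forall>B. eventually (\<lambda>s. s \<in> B) F \<longrightarrow>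
      (\<exists>G. finite G \<and> G \<subseteq> B \<and> eventually (\<lambda>s. s \<in> (\<Union>t\<in>G. linv t A)) F))"

definition F_unif_recurrent :: "'s filter \<Rightarrow> ('s::semigroup_mult \<Rightarrow> 'x::topological_space \<Rightarrow> 'x) \<Rightarrow> 'x \<Rightarrow> bool" where
  "F_unif_recurrent F T x \<longleftrightarrow> (\<forall>U. open U \<and> x \<in> U \<longrightarrow> F_syndetic F {s. T s x \<in> U})"

end

theory Submission
  imports Defs
begin


lemma uf_up: "is_ultrafilter p \<Longrightarrow> A \<in> p \<Longrightarrow> A \<subseteq> B \<Longrightarrow> B \<in> p"
  unfolding is_ultrafilter_def by blast
lemma uf_int: "is_ultrafilter p \<Longrightarrow> A \<in> p \<Longrightarrow> B \<in> p \<Longrightarrow> A \<inter> B \<in> p"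
  unfolding is_ultrafilter_def by blast
lemma uf_empty: "is_ultrafilter p \<Longrightarrow> {} \<notin> p"
  unfolding is_ultrafilter_def by blast
lemma uf_UNIV: "is_ultrafilter p \<Longrightarrow> UNIV \<in> p"
  unfolding is_ultrafilter_def by blast
lemma uf_compl: "is_ultrafilter p \<Longrightarrow> (- A \<in> p) \<longleftrightarrow> A \<notin> p"
  unfolding is_ultrafilter_def by (metis Compl_disjoint2)
lemma uf_Un: "is_ultrafilter p \<Longrightarrow> A \<union> B \<in> p \<Longrightarrow> A \<in> p \<or> B \<in> p"
proof -
  assume u: "is_ultrafilter p" and ab: "A \<union> B \<in> p"
  show ?thesis
  proof (rule ccontr)
    assume "\<not> ?thesis"
    then have "- A \<in> p" "- B \<in> p" using u uf_compl by blast+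
    then have "(A \<union> B) \<inter> (- A \<inter> - B) \<in> p" using u ab uf_int by blast
    then show False using u uf_empty by (metis Int_Un_distrib2 Int_commute Un_Int_eq(4) compl_sup inf_compl_bot)
  qed
qed
lemma uf_finUn: "finite G \<Longrightarrow> is_ultrafilter p \<Longrightarrow> (\<Union>t\<in>G. f t) \<in> p \<Longrightarrow> \<exists>t\<in>G. f t \<in> p"
proof (induction G rule: finite_induct)
  case empty then show ?case using uf_empty by auto
next
  case (insert a G) then show ?case using uf_Un[of p "f a" "\<Union>t\<in>G. f t"] by auto
qed
lemma uf_sub_eq: "is_ultrafilter p \<Longrightarrow> is_ultrafilter q \<Longrightarrow> p \<subseteq> q \<Longrightarrow> p = q"
proof -
  assume a: "is_ultrafilter p" "is_ultrafilter q" "p \<subseteq> q"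
  have "A \<in> p" if "A \<in> q" for A
  proof (rule ccontr)
    assume "A \<notin> p"
    then have "- A \<in> q" using a uf_compl by blast
    then have "A \<inter> - A \<in> q" using a that uf_int by blast
    then show False using uf_empty[OF a(2)] by simp
  qed
  then show ?thesis using a by blast
qed



lemma ultra_exists:
  assumes ne: "\<A> \<noteq> {}" and emp: "{} \<notin> \<A>" and dir: "\<forall>A\<in>\<A>. \<forall>B\<in>\<A>. \<exists>C\<in>\<A>. C \<subseteq> A \<inter> B"
  shows "\<exists>p. is_ultrafilter p \<and> \<A> \<subseteq> p"
proof -
  define Filt where "Filt = {P. \<A> \<subseteq> P \<and> {} \<notin> P \<and> (\<forall>A B. A\<in>P \<and> A\<subseteq>B \<longrightarrow> B\<in>P) \<and> (\<forall>A B. A\<in>P \<and> B\<in>P \<longrightarrow> A\<inter>B\<in>P)}"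
  have FI: "P \<in> Filt" if "\<A> \<subseteq> P" "{} \<notin> P" "\<And>A B. A\<in>P \<Longrightarrow> A\<subseteq>B \<Longrightarrow> B\<in>P" "\<And>A B. A\<in>P \<Longrightarrow> B\<in>P \<Longrightarrow> A\<inter>B\<in>P" for P
    unfolding Filt_def using that by auto
  have F1: "\<A> \<subseteq> P" if "P \<in> Filt" for P using that unfolding Filt_def by simp
  have F2: "{} \<notin> P" if "P \<in> Filt" for P using that unfolding Filt_def by simp
  have F3: "B \<in> P" if "P \<in> Filt" "A \<in> P" "A \<subseteq> B" for P A B using that unfolding Filt_def by simp
  have F4: "A \<inter> B \<in> P" if "P \<in> Filt" "A \<in> P" "B \<in> P" for P A B using that unfolding Filt_def by simp
  define U where "U = {B. \<exists>A\<in>\<A>. A \<subseteq> B}"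
  have U1: "\<A> \<subseteq> U" unfolding U_def by (rule subsetI, rule CollectI, rule bexI, rule subset_refl, assumption)
  have U2: "{} \<notin> U"
  proof
    assume "{} \<in> U"
    then obtain A where "A \<in> \<A>" "A \<subseteq> {}" unfolding U_def by blast
    then have "{} \<in> \<A>" by simp
    then show False using emp by simp
  qed
  have U3: "B \<in> U" if a: "A\<in>U" "A\<subseteq>B" for A B
  proof -
    obtain A' where "A' \<in> \<A>" "A' \<subseteq> A" using a(1) unfolding U_def by blast
    moreover have "A' \<subseteq> B" using \<open>A' \<subseteq> A\<close> a(2) by (rule order_trans)
    ultimately show ?thesis unfolding U_def by blast
  qed
  have U4: "A \<inter> B \<in> U" if a: "A \<in> U" "B \<in> U" for A B
  proof -
    obtain A' B' where ab: "A' \<in> \<A>" "B' \<in> \<A>" "A' \<subseteq> A" "B' \<subseteq> B" using a unfolding U_def by blast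
    obtain C where c: "C \<in> \<A>" "C \<subseteq> A' \<inter> B'" using dir ab(1,2) by blast
    have "C \<subseteq> A \<inter> B" using ab c by (meson Int_mono order_trans)
    then show ?thesis unfolding U_def using c(1) by blast
  qed
  have "U \<in> Filt" by (rule FI[OF U1 U2 U3 U4])
  then have Fne: "Filt \<noteq> {}" by blast
  have chU: "\<Union>C \<in> Filt" if "C \<noteq> {}" "subset.chain Filt C" for C
  proof -
    have ch: "C \<subseteq> Filt" "\<forall>X\<in>C. \<forall>Y\<in>C. X \<subseteq> Y \<or> Y \<subseteq> X" using that(2) by (auto simp: subset_chain_def)
    show ?thesis
    proof (rule FI)
      show "A \<inter> B \<in> \<Union>C" if a: "A \<in> \<Union>C" "B \<in> \<Union>C" for A B
      proof -
        obtain X Y where XY: "X \<in> C" "Y \<in> C" "A \<in> X" "B \<in> Y" using a by auto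
        have XF: "X \<in> Filt" "Y \<in> Filt" using XY ch by auto
        show ?thesis
        proof (cases "X \<subseteq> Y")
          case True then have "A \<inter> B \<in> Y" using F4[OF XF(2)] XY by blast
          then show ?thesis using XY by blast
        next
          case False then have "Y \<subseteq> X" using ch XY by blast
          then have "A \<inter> B \<in> X" using F4[OF XF(1)] XY by blast
          then show ?thesis using XY by blast
        qed
      qed
      obtain X where X: "X \<in> C" using \<open>C \<noteq> {}\<close> by blast
      then show "\<A> \<subseteq> \<Union>C" using F1 ch by blast
      show "{} \<notin> \<Union>C" using ch F2 by blast
      show "B \<in> \<Union>C" if a: "A\<in>\<Union>C" "A\<subseteq>B" for A B
      proof -
        obtain X where "X \<in> C" "A \<in> X" using a by blast
        then show ?thesis using F3[of X A B] ch a by blast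
      qed
    qed
  qed
  obtain M where M0: "M \<in> Filt" "\<forall>X\<in>Filt. M \<subseteq> X \<longrightarrow> X = M"
    using subset_Zorn_nonempty[of Filt, OF Fne chU] by blast
  have M: "M \<in> Filt" "\<And>X. X\<in>Filt \<Longrightarrow> M \<subseteq> X \<Longrightarrow> X = M" using M0 by auto
  have Mp: "\<A> \<subseteq> M" "{} \<notin> M" "\<And>A B. A\<in>M \<Longrightarrow> A\<subseteq>B \<Longrightarrow> B\<in>M" "\<And>A B. A\<in>M \<Longrightarrow> B\<in>M \<Longrightarrow> A\<inter>B\<in>M"
    using F1[OF M(1)] F2[OF M(1)] F3[OF M(1)] F4[OF M(1)] by auto
  obtain A0 where "A0 \<in> \<A>" using ne by blast
  then have univ: "UNIV \<in> M" using Mp(1) Mp(3)[of A0 UNIV] by blast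
  have "A \<in> M \<or> - A \<in> M" for A
  proof (rule ccontr)
    assume nn: "\<not> (A \<in> M \<or> - A \<in> M)"
    show False
    proof (cases "\<exists>P\<in>M. P \<inter> A = {}")
      case True
      then obtain P where "P \<in> M" "P \<subseteq> - A" by blast
      then show False using nn Mp(3) by blast
    next
      case False
      define M' where "M' = {B. \<exists>P\<in>M. P \<inter> A \<subseteq> B}"
      have "M' \<in> Filt"
      proof (rule FI)
        show "\<A> \<subseteq> M'" unfolding M'_def using Mp(1) by blast
        show "{} \<notin> M'" unfolding M'_def using False by blast
        show "Y\<in>M'" if "X\<in>M'" "X\<subseteq>Y" for X Y using that unfolding M'_def by blast
        show "X \<inter> Y \<in> M'" if a: "X\<in>M'" "Y\<in>M'" for X Y
        proof -
          obtain P Q where "P\<in>M" "Q\<in>M" "P \<inter> A \<subseteq> X" "Q \<inter> A \<subseteq> Y" using a unfolding M'_def by blast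
          moreover then have "P \<inter> Q \<in> M" using Mp(4) by blast
          ultimately show "X \<inter> Y \<in> M'" unfolding M'_def by blast
        qed
      qed
      moreover have "M \<subseteq> M'" unfolding M'_def by blast
      ultimately have "M' = M" using M(2) by blast
      moreover have "A \<in> M'" unfolding M'_def using univ by blast
      ultimately show False using nn by blast
    qed
  qed
  moreover have "\<forall>A B. A\<in>M \<and> A\<subseteq>B \<longrightarrow> B\<in>M" using Mp(3) by blast
  moreover have "\<forall>A B. A\<in>M \<and> B\<in>M \<longrightarrow> A\<inter>B\<in>M" using Mp(4) by blast
  ultimately have "is_ultrafilter M" unfolding is_ultrafilter_def using univ Mp(2) by blast
  then show ?thesis using Mp by blast
qed



lemma linv_Int: "linv x (A \<inter> B) = linv x A \<inter> linv x B" by (auto simp: linv_def)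
lemma linv_Compl: "linv x (- A) = - linv x A" by (auto simp: linv_def)
lemma linv_mono: "A \<subseteq> B \<Longrightarrow> linv x A \<subseteq> linv x B" by (auto simp: linv_def)
lemma linv_UNIV: "linv x UNIV = UNIV" by (auto simp: linv_def)
lemma linv_empty: "linv x {} = {}" by (auto simp: linv_def)

lemma uprod_mem: "A \<in> uprod p q \<longleftrightarrow> {x. linv x A \<in> q} \<in> p" by (simp add: uprod_def)

lemma uprod_assoc: "uprod (uprod p q) r = uprod p (uprod q r)"
proof -
  have "{y. linv y {x. linv x A \<in> r} \<in> q} = {y. {x. linv x (linv y A) \<in> r} \<in> q}" for A
    by (simp add: linv_def mult.assoc)
  then show ?thesis unfolding uprod_def by simp
qed

lemma uprod_uf:
  assumes p: "is_ultrafilter p" and q: "is_ultrafilter q"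
  shows "is_ultrafilter (uprod p q)"
proof -
  define D where "D A = {x. linv x A \<in> q}" for A
  have mem: "A \<in> uprod p q \<longleftrightarrow> D A \<in> p" for A unfolding D_def uprod_def by simp
  have D1: "D UNIV = UNIV" unfolding D_def linv_UNIV using uf_UNIV[OF q] by simp
  have D2: "D {} = {}" unfolding D_def linv_empty using uf_empty[OF q] by simp
  have D3: "D A \<subseteq> D B" if "A \<subseteq> B" for A B
    unfolding D_def using linv_mono[OF that] uf_up[OF q] by blast
  have D4: "D (A \<inter> B) = D A \<inter> D B" for A B
  proof -
    have "linv x A \<inter> linv x B \<in> q \<longleftrightarrow> linv x A \<in> q \<and> linv x B \<in> q" for x
      using uf_int[OF q] uf_up[OF q] by (meson inf_le1 inf_le2)
    then show ?thesis unfolding D_def linv_Int by auto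
  qed
  have D5: "D (- A) = - D A" for A
    unfolding D_def linv_Compl using uf_compl[OF q] by auto
  show ?thesis unfolding is_ultrafilter_def mem
  proof (intro conjI allI impI)
    show "D UNIV \<in> p" using D1 uf_UNIV[OF p] by simp
    show "D {} \<notin> p" using D2 uf_empty[OF p] by simp
    show "D B \<in> p" if "D A \<in> p \<and> A \<subseteq> B" for A B using that uf_up[OF p _ D3[of A B]] by blast
    show "D (A \<inter> B) \<in> p" if "D A \<in> p \<and> D B \<in> p" for A B using that D4 uf_int[OF p] by simp
    show "D A \<in> p \<or> D (- A) \<in> p" for A using D5 uf_compl[OF p] by simp
  qed
qed

lemma uprod_betaS: "p \<in> betaS \<Longrightarrow> q \<in> betaS \<Longrightarrow> uprod p q \<in> betaS"
  unfolding betaS_def using uprod_uf by blast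

definition closedb :: "'s set set set \<Rightarrow> bool" where
  "closedb K \<longleftrightarrow> K \<subseteq> betaS \<and> (\<forall>p\<in>betaS. (\<forall>A. (\<forall>r\<in>K. A \<in> r) \<longrightarrow> A \<in> p) \<longrightarrow> p \<in> K)"

lemma closedbI:
  assumes "K \<subseteq> betaS" "\<And>p. p \<in> betaS \<Longrightarrow> (\<And>A. (\<And>r. r \<in> K \<Longrightarrow> A \<in> r) \<Longrightarrow> A \<in> p) \<Longrightarrow> p \<in> K"
  shows "closedb K"
  unfolding closedb_def using assms by blast

lemma closedbD:
  assumes "closedb K" "p \<in> betaS" "\<And>A. (\<And>r. r \<in> K \<Longrightarrow> A \<in> r) \<Longrightarrow> A \<in> p"
  shows "p \<in> K"
  using assms unfolding closedb_def by blast

lemma closedb_sub: "closedb K \<Longrightarrow> K \<subseteq> betaS" unfolding closedb_def by blast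

lemma Fbar_closed: "closedb (Fbar F)"
proof (rule closedbI)
  show "Fbar F \<subseteq> betaS" unfolding Fbar_def by blast
  fix p assume p: "p \<in> betaS" and H: "\<And>A. (\<And>r. r \<in> Fbar F \<Longrightarrow> A \<in> r) \<Longrightarrow> A \<in> p"
  have "A \<in> p" if "eventually (\<lambda>s. s \<in> A) F" for A
    using H[of A] that unfolding Fbar_def by blast
  then show "p \<in> Fbar F" unfolding Fbar_def using p by blast
qed

lemma image_closed:
  assumes K: "closedb K" and e: "e \<in> betaS"
  shows "closedb ((\<lambda>q. uprod q e) ` K)"
proof (rule closedbI)
  have eu: "is_ultrafilter e" using e unfolding betaS_def by simp
  show "(\<lambda>q. uprod q e) ` K \<subseteq> betaS" using closedb_sub[OF K] e uprod_betaS by blast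
  fix p assume p: "p \<in> betaS" and H: "\<And>A. (\<And>r. r \<in> (\<lambda>q. uprod q e) ` K \<Longrightarrow> A \<in> r) \<Longrightarrow> A \<in> p"
  have pu: "is_ultrafilter p" using p unfolding betaS_def by simp
  define D where "D P = {x. linv x P \<in> e}" for P
  have DInt: "D (P \<inter> Q) = D P \<inter> D Q" for P Q
  proof -
    have "linv x P \<inter> linv x Q \<in> e \<longleftrightarrow> linv x P \<in> e \<and> linv x Q \<in> e" for x
      using uf_int[OF eu] uf_up[OF eu] by (meson inf_le1 inf_le2)
    then show ?thesis unfolding D_def linv_Int by auto
  qed
  have DU: "D UNIV = UNIV" unfolding D_def linv_UNIV using uf_UNIV[OF eu] by simp
  define \<A> where "\<A> = {C \<inter> D P | C P. (\<forall>r\<in>K. C \<in> r) \<and> P \<in> p}"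
  have Kuf: "is_ultrafilter r" if "r \<in> K" for r using closedb_sub[OF K] that unfolding betaS_def by blast
  have a1: "UNIV \<inter> D UNIV \<in> \<A>" unfolding \<A>_def using uf_UNIV[OF pu] uf_UNIV Kuf by blast
  then have ne: "\<A> \<noteq> {}" by blast
  have emp: "{} \<notin> \<A>"
  proof
    assume "{} \<in> \<A>"
    then obtain C P where CP: "\<forall>r\<in>K. C \<in> r" "P \<in> p" "C \<inter> D P = {}" unfolding \<A>_def by blast
    have "- P \<in> r'" if a: "r' \<in> (\<lambda>q. uprod q e) ` K" for r'
    proof -
      obtain r where r: "r \<in> K" "r' = uprod r e" using a by blast
      have "D P \<notin> r"
      proof
        assume "D P \<in> r"
        then have "C \<inter> D P \<in> r" using uf_int[OF Kuf[OF r(1)]] CP(1) r(1) by blast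
        then show False using CP(3) uf_empty[OF Kuf[OF r(1)]] by simp
      qed
      then have "P \<notin> r'" unfolding r(2) uprod_mem D_def by simp
      then show ?thesis using uf_compl[OF uprod_uf[OF Kuf[OF r(1)] eu]] r(2) by simp
    qed
    then have "- P \<in> p" using H by blast
    then show False using CP(2) uf_compl[OF pu] by simp
  qed
  have dir: "\<forall>A\<in>\<A>. \<forall>B\<in>\<A>. \<exists>C\<in>\<A>. C \<subseteq> A \<inter> B"
  proof (intro ballI)
    fix A B assume "A \<in> \<A>" "B \<in> \<A>"
    then obtain C1 P1 C2 P2 where c: "A = C1 \<inter> D P1" "\<forall>r\<in>K. C1 \<in> r" "P1 \<in> p"
      "B = C2 \<inter> D P2" "\<forall>r\<in>K. C2 \<in> r" "P2 \<in> p" unfolding \<A>_def by blast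
    have i1: "\<forall>r\<in>K. C1 \<inter> C2 \<in> r"
    proof
      fix r assume "r \<in> K"
      then show "C1 \<inter> C2 \<in> r" using c(2,5) uf_int[OF Kuf[OF \<open>r \<in> K\<close>]] by simp
    qed
    have i2: "P1 \<inter> P2 \<in> p" using uf_int[OF pu c(3) c(6)] .
    have "(C1 \<inter> C2) \<inter> D (P1 \<inter> P2) \<in> \<A>" unfolding \<A>_def
      using i1 i2 by blast
    moreover have "(C1 \<inter> C2) \<inter> D (P1 \<inter> P2) = A \<inter> B" using c DInt by auto
    ultimately show "\<exists>C\<in>\<A>. C \<subseteq> A \<inter> B" by blast
  qed
  obtain q where q: "is_ultrafilter q" "\<A> \<subseteq> q" using ultra_exists[OF ne emp dir] by blast
  have qb: "q \<in> betaS" using q unfolding betaS_def by simp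
  have "q \<in> K"
  proof (rule closedbD[OF K qb])
    fix C assume "\<And>r. r \<in> K \<Longrightarrow> C \<in> r"
    then have "C \<inter> D UNIV \<in> \<A>" unfolding \<A>_def using uf_UNIV[OF pu] by blast
    then show "C \<in> q" using q(2) DU by auto
  qed
  moreover have "p \<subseteq> uprod q e"
  proof
    fix P assume "P \<in> p"
    then have "UNIV \<inter> D P \<in> \<A>" unfolding \<A>_def using uf_UNIV Kuf by blast
    then have "D P \<in> q" using q(2) by auto
    then show "P \<in> uprod q e" unfolding uprod_mem D_def by simp
  qed
  then have "p = uprod q e" using uf_sub_eq[OF pu uprod_uf[OF q(1) eu]] by simp
  ultimately show "p \<in> (\<lambda>q. uprod q e) ` K" by blast
qed

lemma fix_closed:
  assumes K: "closedb K" and e: "e \<in> betaS"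
  shows "closedb {q\<in>K. uprod q e = e}"
proof (rule closedbI)
  have eu: "is_ultrafilter e" using e unfolding betaS_def by simp
  show "{q\<in>K. uprod q e = e} \<subseteq> betaS" using closedb_sub[OF K] by blast
  fix p assume p: "p \<in> betaS" and H: "\<And>A. (\<And>r. r \<in> {q\<in>K. uprod q e = e} \<Longrightarrow> A \<in> r) \<Longrightarrow> A \<in> p"
  have pu: "is_ultrafilter p" using p unfolding betaS_def by simp
  have "p \<in> K"
  proof (rule closedbD[OF K p])
    fix A assume "\<And>r. r \<in> K \<Longrightarrow> A \<in> r"
    then show "A \<in> p" using H by blast
  qed
  moreover have "e \<subseteq> uprod p e"
  proof
    fix P assume P: "P \<in> e"
    have "{x. linv x P \<in> e} \<in> r" if "r \<in> {q\<in>K. uprod q e = e}" for r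
      using that P uprod_mem[of P r e] by auto
    then have "{x. linv x P \<in> e} \<in> p" using H by blast
    then show "P \<in> uprod p e" unfolding uprod_mem by simp
  qed
  then have "uprod p e = e" using uf_sub_eq[OF eu uprod_uf[OF pu eu]] by simp
  ultimately show "p \<in> {q\<in>K. uprod q e = e}" by blast
qed

lemma chain_inter_nonempty:
  assumes ne: "\<C> \<noteq> {}" and cl: "\<And>K. K \<in> \<C> \<Longrightarrow> closedb K \<and> K \<noteq> {}"
    and ch: "\<forall>X\<in>\<C>. \<forall>Y\<in>\<C>. X \<subseteq> Y \<or> Y \<subseteq> X"
  shows "\<Inter>\<C> \<noteq> {}"
proof -
  have Kuf: "is_ultrafilter r" if "r \<in> K" "K \<in> \<C>" for r K
    using closedb_sub cl that unfolding betaS_def by blast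
  define \<A> where "\<A> = {A. \<exists>K\<in>\<C>. \<forall>r\<in>K. A \<in> r}"
  obtain K0 where "K0 \<in> \<C>" using ne by blast
  then have "UNIV \<in> \<A>" unfolding \<A>_def using Kuf uf_UNIV by blast
  then have a1: "\<A> \<noteq> {}" by blast
  have a2: "{} \<notin> \<A>"
  proof
    assume "{} \<in> \<A>"
    then obtain K where K: "K \<in> \<C>" "\<forall>r\<in>K. {} \<in> r" unfolding \<A>_def by blast
    then obtain r where "r \<in> K" using cl by blast
    then show False using K Kuf uf_empty by blast
  qed
  have a3: "\<forall>A\<in>\<A>. \<forall>B\<in>\<A>. \<exists>C\<in>\<A>. C \<subseteq> A \<inter> B"
  proof (intro ballI)
    fix A B assume "A \<in> \<A>" "B \<in> \<A>"
    then obtain K1 K2 where k: "K1 \<in> \<C>" "\<forall>r\<in>K1. A \<in> r" "K2 \<in> \<C>" "\<forall>r\<in>K2. B \<in> r"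
      unfolding \<A>_def by blast
    have "A \<inter> B \<in> \<A>"
    proof (cases "K1 \<subseteq> K2")
      case True
      have "\<forall>r\<in>K1. A \<inter> B \<in> r"
      proof
        fix r assume r: "r \<in> K1"
        then have "r \<in> K2" using True by blast
        then show "A \<inter> B \<in> r" using k r uf_int[OF Kuf[OF r k(1)]] by simp
      qed
      then show ?thesis unfolding \<A>_def using k(1) by blast
    next
      case False
      then have "K2 \<subseteq> K1" using ch k by blast
      have "\<forall>r\<in>K2. A \<inter> B \<in> r"
      proof
        fix r assume r: "r \<in> K2"
        then have "r \<in> K1" using \<open>K2 \<subseteq> K1\<close> by blast
        then show "A \<inter> B \<in> r" using k r uf_int[OF Kuf[OF r k(3)]] by simp
      qed
      then show ?thesis unfolding \<A>_def using k(3) by blast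
    qed
    then show "\<exists>C\<in>\<A>. C \<subseteq> A \<inter> B" by blast
  qed
  obtain p where p: "is_ultrafilter p" "\<A> \<subseteq> p" using ultra_exists[OF a1 a2 a3] by blast
  have "p \<in> K" if "K \<in> \<C>" for K
  proof (rule closedbD)
    show "closedb K" using cl that by blast
    show "p \<in> betaS" using p unfolding betaS_def by simp
    fix A assume "\<And>r. r \<in> K \<Longrightarrow> A \<in> r"
    then have "A \<in> \<A>" unfolding \<A>_def using that by blast
    then show "A \<in> p" using p by blast
  qed
  then show ?thesis by blast
qed

lemma inter_closed:
  assumes ne: "\<C> \<noteq> {}" and cl: "\<And>K. K \<in> \<C> \<Longrightarrow> closedb K"
  shows "closedb (\<Inter>\<C>)"
proof (rule closedbI)
  show "\<Inter>\<C> \<subseteq> betaS" using ne cl closedb_sub by blast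
  fix p assume p: "p \<in> betaS" and H: "\<And>A. (\<And>r. r \<in> \<Inter>\<C> \<Longrightarrow> A \<in> r) \<Longrightarrow> A \<in> p"
  have "p \<in> K" if "K \<in> \<C>" for K
  proof (rule closedbD[OF cl[OF that] p])
    fix A assume "\<And>r. r \<in> K \<Longrightarrow> A \<in> r"
    then show "A \<in> p" using H that by blast
  qed
  then show "p \<in> \<Inter>\<C>" by blast
qed



lemma Zorn_min:
  assumes ne: "\<S> \<noteq> {}"
    and ch: "\<And>C. C \<noteq> {} \<Longrightarrow> C \<subseteq> \<S> \<Longrightarrow> (\<forall>X\<in>C. \<forall>Y\<in>C. X \<subseteq> Y \<or> Y \<subseteq> X) \<Longrightarrow> \<Inter>C \<in> \<S>"
  shows "\<exists>M\<in>\<S>. \<forall>X\<in>\<S>. X \<subseteq> M \<longrightarrow> X = M"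
proof -
  have ne': "uminus ` \<S> \<noteq> {}" using ne by blast
  have ch': "\<Union>C' \<in> uminus ` \<S>" if a: "C' \<noteq> {}" "subset.chain (uminus ` \<S>) C'" for C'
  proof -
    have c1: "C' \<subseteq> uminus ` \<S>" "\<forall>X\<in>C'. \<forall>Y\<in>C'. X \<subseteq> Y \<or> Y \<subseteq> X"
      using a(2) by (auto simp: subset_chain_def)
    define C where "C = uminus ` C'"
    have h1: "C \<subseteq> \<S>" unfolding C_def using c1(1) by auto
    have h2: "C \<noteq> {}" unfolding C_def using a(1) by blast
    have h3: "\<forall>X\<in>C. \<forall>Y\<in>C. X \<subseteq> Y \<or> Y \<subseteq> X"
    proof (intro ballI)
      fix X Y assume "X \<in> C" "Y \<in> C"
      then obtain X' Y' where xy: "X' \<in> C'" "Y' \<in> C'" "X = - X'" "Y = - Y'" unfolding C_def by blast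
      have "X' \<subseteq> Y' \<or> Y' \<subseteq> X'" using c1(2) xy(1,2) by blast
      then show "X \<subseteq> Y \<or> Y \<subseteq> X" unfolding xy(3,4) by auto
    qed
    have "\<Inter>C \<in> \<S>" using ch[OF h2 h1 h3] .
    moreover have "\<Union>C' = - \<Inter>C" unfolding C_def by auto
    ultimately show ?thesis by blast
  qed
  obtain M' where M': "M' \<in> uminus ` \<S>" "\<forall>X\<in>uminus ` \<S>. M' \<subseteq> X \<longrightarrow> X = M'"
    using subset_Zorn_nonempty[OF ne' ch'] by blast
  obtain M where M: "M \<in> \<S>" "M' = - M" using M'(1) by blast
  have "X = M" if "X \<in> \<S>" "X \<subseteq> M" for X
  proof -
    have "-X \<in> uminus ` \<S>" using that(1) by blast
    moreover have "M' \<subseteq> -X" using that(2) M(2) by blast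
    ultimately have "-X = M'" using M'(2) by blast
    then show ?thesis using M(2) by simp
  qed
  then show ?thesis using M(1) by blast
qed

definition csemi :: "'s::semigroup_mult set set set \<Rightarrow> bool" where
  "csemi K \<longleftrightarrow> K \<noteq> {} \<and> closedb K \<and> (\<forall>p\<in>K. \<forall>q\<in>K. uprod p q \<in> K)"

lemma ellis:
  assumes K: "csemi K"
  shows "\<exists>e\<in>K. uprod e e = e"
proof -
  define \<S> where "\<S> = {A. A \<subseteq> K \<and> csemi A}"
  have ne: "\<S> \<noteq> {}" unfolding \<S>_def using K by blast
  have ch: "\<Inter>C \<in> \<S>" if a: "C \<noteq> {}" "C \<subseteq> \<S>" "\<forall>X\<in>C. \<forall>Y\<in>C. X \<subseteq> Y \<or> Y \<subseteq> X" for C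
  proof -
    have cs: "csemi X" "X \<subseteq> K" if "X \<in> C" for X using a(2) that unfolding \<S>_def by blast+
    have "\<Inter>C \<noteq> {}"
      by (rule chain_inter_nonempty[OF a(1) _ a(3)]) (use cs in \<open>auto simp: csemi_def\<close>)
    moreover have "closedb (\<Inter>C)" using inter_closed[OF a(1)] cs unfolding csemi_def by blast
    moreover have "\<forall>p\<in>\<Inter>C. \<forall>q\<in>\<Inter>C. uprod p q \<in> \<Inter>C"
    proof (intro ballI InterI)
      fix p q X assume "p \<in> \<Inter>C" "q \<in> \<Inter>C" "X \<in> C"
      then show "uprod p q \<in> X" using cs(1)[OF \<open>X \<in> C\<close>] unfolding csemi_def by blast
    qed
    moreover have "\<Inter>C \<subseteq> K" using a(1) cs(2) by blast
    ultimately show ?thesis unfolding \<S>_def csemi_def by blast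
  qed
  obtain M where M: "M \<in> \<S>" "\<And>X. X \<in> \<S> \<Longrightarrow> X \<subseteq> M \<Longrightarrow> X = M"
    using Zorn_min[OF ne ch] by blast
  have Ms: "M \<noteq> {}" "closedb M" "\<And>p q. p \<in> M \<Longrightarrow> q \<in> M \<Longrightarrow> uprod p q \<in> M" "M \<subseteq> K"
    using M(1) unfolding \<S>_def csemi_def by blast+
  obtain e where e: "e \<in> M" using Ms(1) by blast
  have eb: "e \<in> betaS" using e closedb_sub[OF Ms(2)] by blast
  define Me where "Me = (\<lambda>q. uprod q e) ` M"
  have "Me \<in> \<S>"
  proof -
    have "Me \<subseteq> M" unfolding Me_def using Ms(3) e by blast
    moreover have "Me \<noteq> {}" unfolding Me_def using e by blast
    moreover have "closedb Me" unfolding Me_def using image_closed[OF Ms(2) eb] .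
    moreover have "\<forall>p\<in>Me. \<forall>q\<in>Me. uprod p q \<in> Me"
    proof (intro ballI)
      fix p q assume "p \<in> Me" "q \<in> Me"
      then obtain p' q' where pq: "p' \<in> M" "q' \<in> M" "p = uprod p' e" "q = uprod q' e"
        unfolding Me_def by blast
      have "uprod p q = uprod (uprod (uprod p' e) q') e" unfolding pq uprod_assoc ..
      moreover have "uprod (uprod p' e) q' \<in> M" using Ms(3) pq e by blast
      ultimately show "uprod p q \<in> Me" unfolding Me_def by blast
    qed
    ultimately show ?thesis unfolding \<S>_def csemi_def using Ms(4) by blast
  qed
  moreover have "Me \<subseteq> M" unfolding Me_def using Ms(3) e by blast
  ultimately have MeM: "Me = M" using M(2) by blast
  define K0 where "K0 = {q\<in>M. uprod q e = e}"
  have "K0 \<in> \<S>"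
  proof -
    have "e \<in> Me" using MeM e by simp
    then have "K0 \<noteq> {}" unfolding K0_def Me_def by blast
    moreover have "closedb K0" unfolding K0_def using fix_closed[OF Ms(2) eb] .
    moreover have "\<forall>p\<in>K0. \<forall>q\<in>K0. uprod p q \<in> K0"
    proof (intro ballI)
      fix p q assume "p \<in> K0" "q \<in> K0"
      then have "p \<in> M" "q \<in> M" "uprod p e = e" "uprod q e = e" unfolding K0_def by blast+
      then show "uprod p q \<in> K0" unfolding K0_def using Ms(3) uprod_assoc[of p q e] by simp
    qed
    moreover have "K0 \<subseteq> K" unfolding K0_def using Ms(4) by blast
    ultimately show ?thesis unfolding \<S>_def csemi_def by blast
  qed
  moreover have "K0 \<subseteq> M" unfolding K0_def by blast
  ultimately have "K0 = M" using M(2) by blast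
  then have "e \<in> K0" using e by simp
  then show ?thesis unfolding K0_def using Ms(4) by blast
qed



lemma Tp_unique:
  fixes T :: "'s \<Rightarrow> 'x::t2_space \<Rightarrow> 'x"
  assumes p: "p \<in> betaS" and H: "\<And>U. open U \<Longrightarrow> y \<in> U \<Longrightarrow> {s. T s x \<in> U} \<in> p"
  shows "Tp T p x = y"
  unfolding Tp_def
proof (rule the_equality)
  show "\<forall>U. open U \<and> y \<in> U \<longrightarrow> {s. T s x \<in> U} \<in> p" using H by simp
  have pu: "is_ultrafilter p" using p unfolding betaS_def by simp
  fix y' assume H': "\<forall>U. open U \<and> y' \<in> U \<longrightarrow> {s. T s x \<in> U} \<in> p"
  show "y' = y"
  proof (rule ccontr)
    assume "y' \<noteq> y"
    then obtain U V where UV: "open U" "open V" "y' \<in> U" "y \<in> V" "U \<inter> V = {}"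
      using hausdorff[OF \<open>y' \<noteq> y\<close>] by blast
    have h1: "{s. T s x \<in> U} \<in> p" using H' UV(1,3) by simp
    have h2: "{s. T s x \<in> V} \<in> p" using H[OF UV(2,4)] .
    have "{s. T s x \<in> U} \<inter> {s. T s x \<in> V} \<in> p" using uf_int[OF pu h1 h2] .
    moreover have "{s. T s x \<in> U} \<inter> {s. T s x \<in> V} = {}" using UV(5) by auto
    ultimately show False using uf_empty[OF pu] by simp
  qed
qed

lemma Tp_exists:
  fixes T :: "'s::semigroup_mult \<Rightarrow> 'x::t2_space \<Rightarrow> 'x"
  assumes T: "dyn_system T" and p: "p \<in> betaS"
  shows "\<exists>y. \<forall>U. open U \<and> y \<in> U \<longrightarrow> {s. T s x \<in> U} \<in> p"
proof (rule ccontr)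
  assume "\<not> ?thesis"
  then have "\<forall>y. \<exists>U. open U \<and> y \<in> U \<and> {s. T s x \<in> U} \<notin> p" by blast
  then obtain f where f: "\<And>y. open (f y)" "\<And>y. y \<in> f y" "\<And>y. {s. T s x \<in> f y} \<notin> p" by metis
  have pu: "is_ultrafilter p" using p unfolding betaS_def by simp
  have cpt: "compact (UNIV :: 'x set)" using T unfolding dyn_system_def by blast
  have cov: "UNIV \<subseteq> (\<Union>c\<in>UNIV. f c)" using f(2) by auto
  obtain C' where C': "C' \<subseteq> UNIV" "finite C'" "UNIV \<subseteq> (\<Union>c\<in>C'. f c)"
    by (rule compactE_image[OF cpt, of UNIV f, OF f(1) cov])
  have "(\<Union>c\<in>C'. {s. T s x \<in> f c}) = UNIV" using C'(3) by auto
  then have "(\<Union>c\<in>C'. {s. T s x \<in> f c}) \<in> p" using uf_UNIV[OF pu] by simp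
  then obtain c where "{s. T s x \<in> f c} \<in> p" using uf_finUn[OF C'(2) pu] by blast
  then show False using f(3) by blast
qed

lemma Tp_prop:
  fixes T :: "'s::semigroup_mult \<Rightarrow> 'x::t2_space \<Rightarrow> 'x"
  assumes T: "dyn_system T" and p: "p \<in> betaS" and U: "open U" "Tp T p x \<in> U"
  shows "{s. T s x \<in> U} \<in> p"
proof -
  obtain y where y: "\<forall>U. open U \<and> y \<in> U \<longrightarrow> {s. T s x \<in> U} \<in> p" using Tp_exists[OF T p] by blast
  have "Tp T p x = y" using Tp_unique[OF p] y by blast
  then show ?thesis using y U by blast
qed

lemma Tp_comp:
  fixes T :: "'s::semigroup_mult \<Rightarrow> 'x::t2_space \<Rightarrow> 'x"
  assumes T: "dyn_system T" and p: "p \<in> betaS" and q: "q \<in> betaS"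
  shows "Tp T p (Tp T q x) = Tp T (uprod p q) x"
proof -
  define z where "z = Tp T q x"
  have pu: "is_ultrafilter p" using p unfolding betaS_def by simp
  have qu: "is_ultrafilter q" using q unfolding betaS_def by simp
  have comp: "T t (T s x) = T (t * s) x" for t s
    using T unfolding dyn_system_def by (metis comp_apply)
  have "Tp T (uprod p q) x = Tp T p z"
  proof (rule Tp_unique[OF uprod_betaS[OF p q]])
    fix U :: "'x set" assume U: "open U" "Tp T p z \<in> U"
    have P: "{t. T t z \<in> U} \<in> p" using Tp_prop[OF T p U] .
    have "{t. T t z \<in> U} \<subseteq> {t. linv t {s. T s x \<in> U} \<in> q}"
    proof
      fix t assume "t \<in> {t. T t z \<in> U}"
      then have tz: "z \<in> T t -` U" by simp
      have "continuous_on UNIV (T t)" using T unfolding dyn_system_def by blast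
      then have "open (T t -` U)" using iffD1[OF continuous_on_open_vimage[OF open_UNIV], of "T t"] U(1) by simp
      then have "{s. T s x \<in> T t -` U} \<in> q" using Tp_prop[OF T q, of "T t -` U" x] tz unfolding z_def by blast
      moreover have "{s. T s x \<in> T t -` U} = linv t {s. T s x \<in> U}" unfolding linv_def using comp by simp
      ultimately show "t \<in> {t. linv t {s. T s x \<in> U} \<in> q}" by simp
    qed
    then have "{t. linv t {s. T s x \<in> U} \<in> q} \<in> p" using uf_up[OF pu P] by blast
    then show "{s. T s x \<in> U} \<in> uprod p q" unfolding uprod_mem .
  qed
  then show ?thesis unfolding z_def by simp
qed



lemma Fbar_betaS: "Fbar F \<subseteq> betaS" unfolding Fbar_def by blast

lemma Fbar_mem: "p \<in> Fbar F \<Longrightarrow> eventually (\<lambda>s. s \<in> A) F \<Longrightarrow> A \<in> p"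
  unfolding Fbar_def by blast

lemma Fbar_uf: "p \<in> Fbar F \<Longrightarrow> is_ultrafilter p"
  unfolding Fbar_def betaS_def by blast

lemma Fbar_I: "is_ultrafilter p \<Longrightarrow> (\<And>A. eventually (\<lambda>s. s \<in> A) F \<Longrightarrow> A \<in> p) \<Longrightarrow> p \<in> Fbar F"
  unfolding Fbar_def betaS_def by blast

lemma L_eq:
  assumes sg: "subsemigroup (Fbar F)" and mL: "minimal_left_ideal (Fbar F) L" and v: "v \<in> L"
  shows "L = (\<lambda>q. uprod q v) ` Fbar F"
proof -
  have LI: "L \<noteq> {}" "L \<subseteq> Fbar F" "\<And>q p. q \<in> Fbar F \<Longrightarrow> p \<in> L \<Longrightarrow> uprod q p \<in> L"
    using mL unfolding minimal_left_ideal_def left_ideal_def by blast+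
  have min: "\<And>L'. left_ideal (Fbar F) L' \<Longrightarrow> L' \<subseteq> L \<Longrightarrow> L' = L"
    using mL unfolding minimal_left_ideal_def by blast
  have S: "Fbar F \<noteq> {}" "\<And>p q. p \<in> Fbar F \<Longrightarrow> q \<in> Fbar F \<Longrightarrow> uprod p q \<in> Fbar F"
    using sg unfolding subsemigroup_def by blast+
  define L' where "L' = (\<lambda>q. uprod q v) ` Fbar F"
  have sub: "L' \<subseteq> L" unfolding L'_def using LI(3) v by blast
  have "left_ideal (Fbar F) L'"
    unfolding left_ideal_def
  proof (intro conjI ballI)
    show "L' \<noteq> {}" unfolding L'_def using S(1) by blast
    show "L' \<subseteq> Fbar F" using sub LI(2) by blast
    fix q p assume q: "q \<in> Fbar F" and p: "p \<in> L'"
    then obtain r where r: "r \<in> Fbar F" "p = uprod r v" unfolding L'_def by blast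
    have "uprod q p = uprod (uprod q r) v" unfolding r(2) uprod_assoc ..
    moreover have "uprod q r \<in> Fbar F" using S(2)[OF q r(1)] .
    ultimately show "uprod q p \<in> L'" unfolding L'_def by blast
  qed
  then show ?thesis using min sub unfolding L'_def by blast
qed

lemma a_to_b:
  fixes T :: "'s::semigroup_mult \<Rightarrow> 'x::t2_space \<Rightarrow> 'x"
  assumes sg: "subsemigroup (Fbar F)" and T: "dyn_system T" and mL: "minimal_left_ideal (Fbar F) L"
    and ur: "F_unif_recurrent F T x"
  shows "\<exists>u\<in>L. Tp T u x = x"
proof -
  have LI: "L \<noteq> {}" "L \<subseteq> Fbar F" "\<And>q p. q \<in> Fbar F \<Longrightarrow> p \<in> L \<Longrightarrow> uprod q p \<in> L"
    using mL unfolding minimal_left_ideal_def left_ideal_def by blast+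
  obtain v where v: "v \<in> L" using LI(1) by blast
  have vF: "v \<in> Fbar F" using v LI(2) by blast
  have vu: "is_ultrafilter v" using Fbar_uf[OF vF] .
  define AU where "AU U = {s. T s x \<in> U}" for U
  define CU where "CU U = {t. linv t (AU U) \<in> v}" for U
  define \<A> where "\<A> = {B \<inter> CU U | B U. eventually (\<lambda>s. s \<in> B) F \<and> open U \<and> x \<in> U}"
  have CUNIV: "CU UNIV = UNIV" unfolding CU_def AU_def using uf_UNIV[OF vu] by (simp add: linv_def)
  have evU: "eventually (\<lambda>s. s \<in> UNIV) F" by simp
  have a1: "UNIV \<inter> CU UNIV \<in> \<A>" unfolding \<A>_def using evU by blast
  then have ne: "\<A> \<noteq> {}" by blast
  have emp: "{} \<notin> \<A>"
  proof
    assume "{} \<in> \<A>"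
    then obtain B U where BU: "eventually (\<lambda>s. s \<in> B) F" "open U" "x \<in> U" "B \<inter> CU U = {}"
      unfolding \<A>_def by blast
    have "F_syndetic F (AU U)" using ur BU(2,3) unfolding F_unif_recurrent_def AU_def by blast
    then obtain G where G: "finite G" "G \<subseteq> B" "eventually (\<lambda>s. s \<in> (\<Union>t\<in>G. linv t (AU U))) F"
      using BU(1) unfolding F_syndetic_def by blast
    have "(\<Union>t\<in>G. linv t (AU U)) \<in> v" using Fbar_mem[OF vF G(3)] .
    then obtain t where t: "t \<in> G" "linv t (AU U) \<in> v" using uf_finUn[OF G(1) vu] by blast
    have "t \<in> B \<inter> CU U" using t G(2) unfolding CU_def by blast
    then show False using BU(4) by simp
  qed
  have mono: "CU U' \<subseteq> CU U" if "U' \<subseteq> U" for U U'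
  proof
    fix t assume t: "t \<in> CU U'"
    have "AU U' \<subseteq> AU U" using that unfolding AU_def by auto
    then have sub: "linv t (AU U') \<subseteq> linv t (AU U)" by (rule linv_mono)
    have "linv t (AU U') \<in> v" using t unfolding CU_def by simp
    then have "linv t (AU U) \<in> v" using uf_up[OF vu _ sub] by simp
    then show "t \<in> CU U" unfolding CU_def by simp
  qed
  have dir: "\<forall>A\<in>\<A>. \<forall>B\<in>\<A>. \<exists>C\<in>\<A>. C \<subseteq> A \<inter> B"
  proof (intro ballI)
    fix A B assume "A \<in> \<A>" "B \<in> \<A>"
    then obtain B1 U1 B2 U2 where c: "A = B1 \<inter> CU U1" "eventually (\<lambda>s. s \<in> B1) F" "open U1" "x \<in> U1"
      "B = B2 \<inter> CU U2" "eventually (\<lambda>s. s \<in> B2) F" "open U2" "x \<in> U2" unfolding \<A>_def by blast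
    have e12: "eventually (\<lambda>s. s \<in> B1 \<inter> B2) F" using eventually_conj[OF c(2) c(6)] by simp
    have o12: "open (U1 \<inter> U2)" "x \<in> U1 \<inter> U2" using c by auto
    have "(B1 \<inter> B2) \<inter> CU (U1 \<inter> U2) \<in> \<A>" unfolding \<A>_def using e12 o12 by blast
    moreover have "(B1 \<inter> B2) \<inter> CU (U1 \<inter> U2) \<subseteq> A \<inter> B"
      using mono[of "U1 \<inter> U2" U1] mono[of "U1 \<inter> U2" U2] c(1,5) by auto
    ultimately show "\<exists>C\<in>\<A>. C \<subseteq> A \<inter> B" by blast
  qed
  obtain q where q: "is_ultrafilter q" "\<A> \<subseteq> q" using ultra_exists[OF ne emp dir] by blast
  have qF: "q \<in> Fbar F"
  proof (rule Fbar_I[OF q(1)])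
    fix B assume "eventually (\<lambda>s. s \<in> B) F"
    then have "B \<inter> CU UNIV \<in> \<A>" unfolding \<A>_def by blast
    then show "B \<in> q" using q(2) CUNIV by auto
  qed
  have uL: "uprod q v \<in> L" using LI(3)[OF qF v] .
  have "Tp T (uprod q v) x = x"
  proof (rule Tp_unique)
    show "uprod q v \<in> betaS" using uL LI(2) Fbar_betaS by blast
    fix U :: "'x set" assume "open U" "x \<in> U"
    then have "UNIV \<inter> CU U \<in> \<A>" unfolding \<A>_def using evU by blast
    then have "CU U \<in> q" using q(2) by auto
    then show "{s. T s x \<in> U} \<in> uprod q v" unfolding uprod_mem CU_def AU_def by simp
  qed
  then show ?thesis using uL by blast
qed

lemma b_to_a:
  fixes T :: "'s::semigroup_mult \<Rightarrow> 'x::t2_space \<Rightarrow> 'x"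
  assumes sg: "subsemigroup (Fbar F)" and T: "dyn_system T" and mL: "minimal_left_ideal (Fbar F) L"
    and u: "u \<in> L" and fx: "Tp T u x = x"
  shows "F_unif_recurrent F T x"
  unfolding F_unif_recurrent_def
proof (intro allI impI)
  have LI: "L \<noteq> {}" "L \<subseteq> Fbar F" "\<And>q p. q \<in> Fbar F \<Longrightarrow> p \<in> L \<Longrightarrow> uprod q p \<in> L"
    using mL unfolding minimal_left_ideal_def left_ideal_def by blast+
  have uF: "u \<in> Fbar F" using u LI(2) by blast
  fix U :: "'x set" assume U: "open U \<and> x \<in> U"
  define A where "A = {s. T s x \<in> U}"
  show "F_syndetic F {s. T s x \<in> U}"
    unfolding F_syndetic_def A_def[symmetric]
  proof (intro allI impI)
    fix B assume B: "eventually (\<lambda>s. s \<in> B) F"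
    show "\<exists>G. finite G \<and> G \<subseteq> B \<and> eventually (\<lambda>s. s \<in> (\<Union>t\<in>G. linv t A)) F"
    proof (rule ccontr)
      assume nG: "\<not> ?thesis"
      define \<A> where "\<A> = {C - (\<Union>t\<in>G. linv t A) | C G. eventually (\<lambda>s. s \<in> C) F \<and> finite G \<and> G \<subseteq> B}"
      have evU: "eventually (\<lambda>s. s \<in> UNIV) F" by simp
      have a0: "UNIV - (\<Union>t\<in>{}. linv t A) \<in> \<A>" unfolding \<A>_def using evU by blast
      then have ne: "\<A> \<noteq> {}" by blast
      have emp: "{} \<notin> \<A>"
      proof
        assume "{} \<in> \<A>"
        then obtain C G where CG: "eventually (\<lambda>s. s \<in> C) F" "finite G" "G \<subseteq> B" "C - (\<Union>t\<in>G. linv t A) = {}"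
          unfolding \<A>_def by blast
        have "C \<subseteq> (\<Union>t\<in>G. linv t A)" using CG(4) by blast
        then have "eventually (\<lambda>s. s \<in> (\<Union>t\<in>G. linv t A)) F"
          using eventually_mono[OF CG(1)] by (metis subsetD)
        then show False using nG CG(2,3) by blast
      qed
      have dir: "\<forall>X\<in>\<A>. \<forall>Y\<in>\<A>. \<exists>Z\<in>\<A>. Z \<subseteq> X \<inter> Y"
      proof (intro ballI)
        fix X Y assume "X \<in> \<A>" "Y \<in> \<A>"
        then obtain C1 G1 C2 G2 where c: "X = C1 - (\<Union>t\<in>G1. linv t A)" "eventually (\<lambda>s. s \<in> C1) F" "finite G1" "G1 \<subseteq> B"
          "Y = C2 - (\<Union>t\<in>G2. linv t A)" "eventually (\<lambda>s. s \<in> C2) F" "finite G2" "G2 \<subseteq> B"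
          unfolding \<A>_def by blast
        have e12: "eventually (\<lambda>s. s \<in> C1 \<inter> C2) F" using eventually_conj[OF c(2) c(6)] by simp
        have g: "finite (G1 \<union> G2)" "G1 \<union> G2 \<subseteq> B" using c by auto
        have "(C1 \<inter> C2) - (\<Union>t\<in>G1 \<union> G2. linv t A) \<in> \<A>" unfolding \<A>_def using e12 g by blast
        moreover have "(C1 \<inter> C2) - (\<Union>t\<in>G1 \<union> G2. linv t A) \<subseteq> X \<inter> Y" using c(1,5) by auto
        ultimately show "\<exists>Z\<in>\<A>. Z \<subseteq> X \<inter> Y" by blast
      qed
      obtain p where p: "is_ultrafilter p" "\<A> \<subseteq> p" using ultra_exists[OF ne emp dir] by blast
      have pF: "p \<in> Fbar F"
      proof (rule Fbar_I[OF p(1)])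
        fix C assume "eventually (\<lambda>s. s \<in> C) F"
        then have "C - (\<Union>t\<in>{}. linv t A) \<in> \<A>" unfolding \<A>_def by blast
        then show "C \<in> p" using p(2) by auto
      qed
      have nt: "linv t A \<notin> p" if "t \<in> B" for t
      proof -
        have m: "UNIV - (\<Union>t\<in>{t}. linv t A) \<in> \<A>" unfolding \<A>_def using evU that by blast
        have "UNIV - (\<Union>t\<in>{t}. linv t A) \<in> p" using subsetD[OF p(2) m] .
        then have "- linv t A \<in> p" by (simp add: Compl_eq_Diff_UNIV)
        then show ?thesis using uf_compl[OF p(1)] by simp
      qed
      have puL: "uprod p u \<in> L" using LI(3)[OF pF u] .
      have "u \<in> (\<lambda>q. uprod q (uprod p u)) ` Fbar F" using L_eq[OF sg mL puL] u by simp
      then obtain q where q: "q \<in> Fbar F" "u = uprod q (uprod p u)" by blast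
      have pb: "p \<in> betaS" and qb: "q \<in> betaS" and ub: "u \<in> betaS"
        using pF q(1) uF Fbar_betaS by blast+
      have "x = Tp T (uprod q (uprod p u)) x" using fx q(2) by simp
      also have "\<dots> = Tp T q (Tp T (uprod p u) x)" using Tp_comp[OF T qb uprod_betaS[OF pb ub]] by simp
      also have "\<dots> = Tp T q (Tp T p (Tp T u x))" using Tp_comp[OF T pb ub] by simp
      also have "\<dots> = Tp T q (Tp T p x)" using fx by simp
      also have "\<dots> = Tp T (uprod q p) x" using Tp_comp[OF T qb pb] by simp
      finally have "Tp T (uprod q p) x = x" by simp
      then have "A \<in> uprod q p" unfolding A_def using Tp_prop[OF T uprod_betaS[OF qb pb], of U x] U by simp
      then have D: "{t. linv t A \<in> p} \<in> q" unfolding uprod_mem .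
      have Bq: "B \<in> q" using Fbar_mem[OF q(1) B] .
      have "{t. linv t A \<in> p} \<inter> B = {}" using nt by blast
      then show False using uf_int[OF Fbar_uf[OF q(1)] D Bq] uf_empty[OF Fbar_uf[OF q(1)]] by simp
    qed
  qed
qed



lemma b_to_d:
  fixes T :: "'s::semigroup_mult \<Rightarrow> 'x::t2_space \<Rightarrow> 'x"
  assumes sg: "subsemigroup (Fbar F)" and T: "dyn_system T" and mL: "minimal_left_ideal (Fbar F) L"
    and u: "u \<in> L" and fx: "Tp T u x = x"
  shows "\<exists>e\<in>L. uprod e e = e \<and> Tp T e x = x"
proof -
  have LI: "L \<noteq> {}" "L \<subseteq> Fbar F" "\<And>q p. q \<in> Fbar F \<Longrightarrow> p \<in> L \<Longrightarrow> uprod q p \<in> L"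
    using mL unfolding minimal_left_ideal_def left_ideal_def by blast+
  have min: "\<And>L'. left_ideal (Fbar F) L' \<Longrightarrow> L' \<subseteq> L \<Longrightarrow> L' = L"
    using mL unfolding minimal_left_ideal_def by blast
  have ub: "u \<in> betaS" using u LI(2) Fbar_betaS by blast
  have Lcl: "closedb L" using image_closed[OF Fbar_closed ub] L_eq[OF sg mL u] by simp
  define L' where "L' = (\<lambda>q. uprod q u) ` L"
  have subL: "L' \<subseteq> L" unfolding L'_def using LI(2,3) u by blast
  have "left_ideal (Fbar F) L'"
    unfolding left_ideal_def
  proof (intro conjI ballI)
    show "L' \<noteq> {}" unfolding L'_def using LI(1) by blast
    show "L' \<subseteq> Fbar F" using subL LI(2) by blast
    fix q p assume q: "q \<in> Fbar F" and p: "p \<in> L'"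
    then obtain r where r: "r \<in> L" "p = uprod r u" unfolding L'_def by blast
    have "uprod q p = uprod (uprod q r) u" unfolding r(2) uprod_assoc ..
    moreover have "uprod q r \<in> L" using LI(3)[OF q r(1)] .
    ultimately show "uprod q p \<in> L'" unfolding L'_def by blast
  qed
  then have "L' = L" using min subL by blast
  then have "u \<in> L'" using u by simp
  then obtain v where v: "v \<in> L" "uprod v u = u" unfolding L'_def by blast
  define K0 where "K0 = {q\<in>L. uprod q u = u}"
  have "csemi K0"
    unfolding csemi_def
  proof (intro conjI ballI)
    show "K0 \<noteq> {}" unfolding K0_def using v by blast
    show "closedb K0" unfolding K0_def using fix_closed[OF Lcl ub] .
    fix p q assume "p \<in> K0" "q \<in> K0"
    then have pq: "p \<in> L" "q \<in> L" "uprod p u = u" "uprod q u = u" unfolding K0_def by blast+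
    have "uprod p q \<in> L" using LI(3)[OF _ pq(2)] pq(1) LI(2) by blast
    moreover have "uprod (uprod p q) u = u" using pq(3,4) uprod_assoc[of p q u] by simp
    ultimately show "uprod p q \<in> K0" unfolding K0_def by blast
  qed
  then obtain e where e: "e \<in> K0" "uprod e e = e" using ellis by blast
  have eL: "e \<in> L" "uprod e u = u" using e(1) unfolding K0_def by blast+
  have eb: "e \<in> betaS" using eL(1) LI(2) Fbar_betaS by blast
  have "Tp T e x = Tp T e (Tp T u x)" using fx by simp
  also have "\<dots> = Tp T (uprod e u) x" using Tp_comp[OF T eb ub] .
  also have "\<dots> = x" using eL(2) fx by simp
  finally show ?thesis using eL(1) e(2) by blast
qed

theorem theorem11:
  fixes F :: "'s::semigroup_mult filter"
    and T :: "'s \<Rightarrow> 'x::t2_space \<Rightarrow> 'x"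
    and L :: "'s set set set"
    and x :: 'x
  assumes "subsemigroup (Fbar F)"
    and "dyn_system T"
    and "minimal_left_ideal (Fbar F) L"
  shows "(F_unif_recurrent F T x \<longleftrightarrow> (\<exists>u\<in>L. Tp T u x = x))
       \<and> (F_unif_recurrent F T x \<longleftrightarrow> (\<exists>y u. u \<in> L \<and> uprod u u = u \<and> Tp T u y = x))
       \<and> (F_unif_recurrent F T x \<longleftrightarrow> (\<exists>u\<in>L. uprod u u = u \<and> Tp T u x = x))"
proof -
  note sg = assms(1) and T = assms(2) and mL = assms(3)
  have LF: "L \<subseteq> Fbar F" using mL unfolding minimal_left_ideal_def left_ideal_def by blast
  have ab: "F_unif_recurrent F T x \<longleftrightarrow> (\<exists>u\<in>L. Tp T u x = x)"
    using a_to_b[OF sg T mL] b_to_a[OF sg T mL] by blast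
  have bd: "(\<exists>u\<in>L. Tp T u x = x) \<longleftrightarrow> (\<exists>u\<in>L. uprod u u = u \<and> Tp T u x = x)"
    using b_to_d[OF sg T mL] by blast
  have cd: "(\<exists>y u. u \<in> L \<and> uprod u u = u \<and> Tp T u y = x) \<longleftrightarrow> (\<exists>u\<in>L. uprod u u = u \<and> Tp T u x = x)"
  proof
    assume "\<exists>y u. u \<in> L \<and> uprod u u = u \<and> Tp T u y = x"
    then obtain y u where yu: "u \<in> L" "uprod u u = u" "Tp T u y = x" by blast
    have ub: "u \<in> betaS" using yu(1) LF Fbar_betaS by blast
    have "Tp T u x = Tp T u (Tp T u y)" using yu(3) by simp
    also have "\<dots> = Tp T (uprod u u) y" using Tp_comp[OF T ub ub] .
    also have "\<dots> = x" using yu(2,3) by simp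
    finally show "\<exists>u\<in>L. uprod u u = u \<and> Tp T u x = x" using yu(1,2) by blast
  next
    assume "\<exists>u\<in>L. uprod u u = u \<and> Tp T u x = x"
    then show "\<exists>y u. u \<in> L \<and> uprod u u = u \<and> Tp T u y = x" by blast
  qed
  show ?thesis using ab bd cd by blast
qed


end
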